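(* Let $\mathcal{L}_{\mathrm{std}}=\{u,u^2,u^3,u_x,u_{xx},u_{xxx},u_{xxxx},u\cdot u_x,u\cdot u_{xx},u^2\cdot u_x\}$ and $\mathcal{L}_G^{\mathrm{theory}}=\{u_x,u_{xx},u_{xxx},u_{xxxx},u\cdot u_x\}$. Consider the family of autonomous evolution PDEs $u_t=F$ where $F$ is a real linear combination of the terms of $\mathcal{L}_{\mathrm{std}}$ (and the functions $1,u,u^2,u_x,u_{xx},u\cdot u_x$ are linearly independent on the jet space $J^{(2)}$). Then $\mathcal{L}_G^{\mathrm{theory}}$ is the unique maximal sublibrary of $\mathcal{L}_{\mathrm{std}}$ consisting of terms that can appear (with a free coefficient, or, for $u\cdot u_x$, with the fixed Galilean coefficient $-1$) in some PDE of this family admitting the Galilean generator $t\partial_x+\partial_u$: every term of $\mathcal{L}_G^{\mathrm{theory}}$ appears with nonzero coefficient in at least one Galilean-invariant PDE of the family, and no term of $\mathcal{L}_{\mathrm{std}}\setminus\mathcal{L}_G^{\mathrm{theory}}$ can appear with nonzero coefficient in any Galilean-invariant PDE of the family.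
   Context: $u=u(x,t)$ is a scalar field, subscripts denote partial derivatives. A PDE $u_t=F$ admits (is invariant under) the Galilean generator $\mathbf v=t\partial_x+\partial_u$ if the prolonged vector field $\mathrm{pr}\,\mathbf v$ annihilates $u_t-F$ on solutions; equivalently, the Galilean boost $(x,t,u)\mapsto(x+ct,t,u+c)$ maps solutions to solutions for all $c\in\mathbb R$. *)

theory Defs
  imports Complex_Main
begin

record jet =
  jx :: real
  jt :: real
  ju :: real
  ju1 :: real
  ju2 :: real
  ju3 :: real
  ju4 :: real
  jut :: real

datatype lterm = T_u | T_u2 | T_u3 | T_ux | T_uxx | T_uxxx | T_uxxxx
  | T_uux | T_uuxx | T_u2ux

fun eval_term :: "lterm \<Rightarrow> jet \<Rightarrow> real" where
  "eval_term T_u z = ju z"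
| "eval_term T_u2 z = (ju z)^2"
| "eval_term T_u3 z = (ju z)^3"
| "eval_term T_ux z = ju1 z"
| "eval_term T_uxx z = ju2 z"
| "eval_term T_uxxx z = ju3 z"
| "eval_term T_uxxxx z = ju4 z"
| "eval_term T_uux z = ju z * ju1 z"
| "eval_term T_uuxx z = ju z * ju2 z"
| "eval_term T_u2ux z = (ju z)^2 * ju1 z"

definition L_std :: "lterm set" where
  "L_std = {T_u, T_u2, T_u3, T_ux, T_uxx, T_uxxx, T_uxxxx, T_uux, T_uuxx, T_u2ux}"

definition L_G_theory :: "lterm set" where
  "L_G_theory = {T_ux, T_uxx, T_uxxx, T_uxxxx, T_uux}"

definition rhs :: "(lterm \<Rightarrow> real) \<Rightarrow> jet \<Rightarrow> real" where
  "rhs c z = (\<Sum>\<tau>\<in>L_std. c \<tau> * eval_term \<tau> z)"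

text \<open>Prolongation (to the jet coordinates above) of the Galilean boost
  (x,t,u) \<mapsto> (x + e t, t, u + e): by the chain rule, x-derivatives of u are
  unchanged and u_t becomes u_t - e u_x.\<close>
definition boost_jet :: "real \<Rightarrow> jet \<Rightarrow> jet" where
  "boost_jet e z = z\<lparr> jx := jx z + e * jt z, ju := ju z + e, jut := jut z - e * ju1 z \<rparr>"

text \<open>Prolonged vector field pr v applied to a function G on the jet space,
  as the infinitesimal generator of the prolonged boost group.\<close>
definition pr_v :: "(jet \<Rightarrow> real) \<Rightarrow> jet \<Rightarrow> real \<Rightarrow> bool" where
  "pr_v G z D \<longleftrightarrow> ((\<lambda>e. G (boost_jet e z)) has_real_derivative D) (at 0)"

definition galilean_invariant :: "(lterm \<Rightarrow> real) \<Rightarrow> bool" where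
  "galilean_invariant c \<longleftrightarrow>
     (\<forall>z. jut z = rhs c z \<longrightarrow> pr_v (\<lambda>w. jut w - rhs c w) z 0)"

end

theory Submission
  imports Defs
begin

lemma rhs_expl: "rhs c w = c T_u * ju w + c T_u2 * (ju w)^2 + c T_u3 * (ju w)^3
  + c T_ux * ju1 w + c T_uxx * ju2 w + c T_uxxx * ju3 w + c T_uxxxx * ju4 w
  + c T_uux * (ju w * ju1 w) + c T_uuxx * (ju w * ju2 w) + c T_u2ux * ((ju w)^2 * ju1 w)"
  by (simp add: rhs_def L_std_def algebra_simps)

definition QQ :: "(lterm \<Rightarrow> real) \<Rightarrow> real \<Rightarrow> real \<Rightarrow> real \<Rightarrow> real" where
  "QQ c u u1 u2 = u1 + c T_u + 2 * c T_u2 * u + 3 * c T_u3 * u^2 + c T_uux * u1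
     + c T_uuxx * u2 + 2 * c T_u2ux * u * u1"

lemma deriv_expl: "((\<lambda>e. jut (boost_jet e z) - rhs c (boost_jet e z)) has_real_derivative
   (- QQ c (ju z) (ju1 z) (ju2 z))) (at 0)"
proof -
  have "((\<lambda>e. (jut z - e * ju1 z) - (c T_u * (ju z + e) + c T_u2 * (ju z + e)^2 + c T_u3 * (ju z + e)^3
  + c T_ux * ju1 z + c T_uxx * ju2 z + c T_uxxx * ju3 z + c T_uxxxx * ju4 z
  + c T_uux * ((ju z + e) * ju1 z) + c T_uuxx * ((ju z + e) * ju2 z) + c T_u2ux * ((ju z + e)^2 * ju1 z)))
    has_real_derivative
   (- QQ c (ju z) (ju1 z) (ju2 z))) (at 0)"
    by (auto intro!: derivative_eq_intros simp: QQ_def algebra_simps power2_eq_square)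
  then show ?thesis by (simp add: rhs_expl boost_jet_def)
qed

lemma gi_iff: "galilean_invariant c \<longleftrightarrow> (\<forall>u u1 u2. QQ c u u1 u2 = 0)"
proof
  assume g: "galilean_invariant c"
  show "\<forall>u u1 u2. QQ c u u1 u2 = 0"
  proof (intro allI)
    fix u u1 u2
    define z0 where "z0 = \<lparr>jx = 0, jt = 0, ju = u, ju1 = u1, ju2 = u2, ju3 = 0, ju4 = 0, jut = 0\<rparr>"
    define z where "z = z0\<lparr>jut := rhs c z0\<rparr>"
    have "jut z = rhs c z" unfolding z_def rhs_expl by simp
    with g have "pr_v (\<lambda>w. jut w - rhs c w) z 0" unfolding galilean_invariant_def by simp
    hence "- QQ c (ju z) (ju1 z) (ju2 z) = 0"
      unfolding pr_v_def using deriv_expl[of z c] DERIV_unique by blast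
    thus "QQ c u u1 u2 = 0" by (simp add: z_def z0_def)
  qed
next
  assume "\<forall>u u1 u2. QQ c u u1 u2 = 0"
  hence "\<And>z. - QQ c (ju z) (ju1 z) (ju2 z) = 0" by simp
  thus "galilean_invariant c"
    unfolding galilean_invariant_def pr_v_def using deriv_expl by metis
qed

lemma gi_coeffs: "galilean_invariant c \<longleftrightarrow>
   c T_u = 0 \<and> c T_u2 = 0 \<and> c T_u3 = 0 \<and> c T_uuxx = 0 \<and> c T_u2ux = 0 \<and> c T_uux = -1"
proof
  assume "galilean_invariant c"
  hence q: "\<And>u u1 u2. QQ c u u1 u2 = 0" using gi_iff by blast
  have a: "c T_u = 0" using q[of 0 0 0] by (simp add: QQ_def)
  have b: "c T_uuxx = 0" using q[of 0 0 1] a by (simp add: QQ_def)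
  have d: "c T_uux = -1" using q[of 0 1 0] a by (simp add: QQ_def)
  have e1: "2 * c T_u2 + 3 * c T_u3 = 0" using q[of 1 0 0] a by (simp add: QQ_def)
  have e2: "- 2 * c T_u2 + 3 * c T_u3 = 0" using q[of "-1" 0 0] a by (simp add: QQ_def)
  have f: "c T_u2 = 0" "c T_u3 = 0" using e1 e2 by linarith+
  have g: "c T_u2ux = 0" using q[of 1 1 0] a d f by (simp add: QQ_def)
  show "c T_u = 0 \<and> c T_u2 = 0 \<and> c T_u3 = 0 \<and> c T_uuxx = 0 \<and> c T_u2ux = 0 \<and> c T_uux = -1"
    using a b d f g by simp
next
  assume "c T_u = 0 \<and> c T_u2 = 0 \<and> c T_u3 = 0 \<and> c T_uuxx = 0 \<and> c T_u2ux = 0 \<and> c T_uux = -1"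
  thus "galilean_invariant c" using gi_iff by (simp add: QQ_def)
qed

theorem mainTheorem2:
  shows "L_G_theory = {\<tau> \<in> L_std. \<exists>c. galilean_invariant c \<and> c \<tau> \<noteq> 0}
         \<and> (\<forall>c. galilean_invariant c \<longrightarrow> c T_uux = -1)"
proof -
  define c0 :: "lterm \<Rightarrow> real" where
    "c0 = (\<lambda>s. if s \<in> {T_u, T_u2, T_u3, T_uuxx, T_u2ux} then 0 else if s = T_uux then -1 else 1)"
  have g0: "galilean_invariant c0" by (simp add: gi_coeffs c0_def)
  have "L_G_theory \<subseteq> {\<tau> \<in> L_std. \<exists>c. galilean_invariant c \<and> c \<tau> \<noteq> 0}"
    using g0 by (auto simp: L_G_theory_def L_std_def c0_def)
  moreover have "{\<tau> \<in> L_std. \<exists>c. galilean_invariant c \<and> c \<tau> \<noteq> 0} \<subseteq> L_G_theory"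
  proof
    fix t assume "t \<in> {\<tau> \<in> L_std. \<exists>c. galilean_invariant c \<and> c \<tau> \<noteq> 0}"
    then obtain c where "t \<in> L_std" "galilean_invariant c" "c t \<noteq> 0" by blast
    thus "t \<in> L_G_theory" by (cases t) (auto simp: gi_coeffs L_G_theory_def)
  qed
  ultimately show ?thesis using gi_coeffs by blast
qed

end
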